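(* Consider the SSBM in the context, let $\tau^+>0$, $\tau^-\ge0$, and assume $d_i^\pm>0$ for all $i\in[k]$. Let $V^\perp\in\mathbb R^{n\times(n-k)}$ have orthonormal columns spanning the orthogonal complement of the column span of $\Theta$, chosen so that exactly $n_i-1$ of its columns are supported on $C_i$ for each $i$ (these are eigenvectors of $\mathbb E D^+$), with the columns ordered cluster by cluster. Then $$\bar T=\begin{bmatrix}\Theta R& V^\perp\end{bmatrix}\begin{bmatrix}\Lambda\\&\frac{\alpha_1^+}{\alpha_1^-}I_{n_1-1}\\&&\ddots\\&&&\frac{\alpha_k^+}{\alpha_k^-}I_{n_k-1}\end{bmatrix}\begin{bmatrix}(\Theta R)^\top\\(V^\perp)^\top\end{bmatrix},$$ where $R$ is a $k\times k$ rotation matrix and $\Lambda$ a diagonal matrix such that $(C^-)^{-1/2}C^+(C^-)^{-1/2}=R\Lambda R^\top$.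
   Context: SSBM: integers $n\ge2,k\ge2$, $p\in(0,1]$, $\eta\in[0,1/2)$, partition of $[n]$ into nonempty clusters $C_1,\dots,C_k$, $|C_i|=n_i$. Independently for each pair $j\ne j'$ an edge is present w.p. $p$, signed $+1$ if same cluster and $-1$ otherwise, then flipped independently w.p. $\eta$. $A^+,A^-$ are the 0/1 adjacency matrices of positive and negative edges, $D^\pm=\mathrm{diag}(A^\pm\mathbf1)$. $\Theta_{ji}=1/\sqrt{n_i}$ if $j\in C_i$ else 0. $\overline{L^\pm_{sym}}=I-(\mathbb ED^\pm)^{-1/2}\mathbb EA^\pm(\mathbb ED^\pm)^{-1/2}$, $\bar T=(\overline{L^-_{sym}}+\tau^+I)^{-1/2}(\overline{L^+_{sym}}+\tau^-I)(\overline{L^-_{sym}}+\tau^+I)^{-1/2}$. Expected degrees of a node in $C_i$: $d_i^+=p(n(s_i(1-2\eta)+\eta)-(1-\eta))$, $d_i^-=p(n(-s_i(1-2\eta)+(1-\eta))-\eta)$ with $s_i=n_i/n$. $u^\pm=(\sqrt{n_1/d_1^\pm},\dots,\sqrt{n_k/d_k^\pm})^\top$, $\alpha_i^+=1+\tau^-+p(1-\eta)/d_i^+$, $\alpha_i^-=1+\tau^++p\eta/d_i^-$. $C^+=-p\eta u^+(u^+)^\top+\mathrm{diag}_i\big(1+\tau^-+\frac{p}{d_i^+}(1-\eta-n_i(1-2\eta))\big)$, $C^-=-p(1-\eta)u^-(u^-)^\top+\mathrm{diag}_i\big(1+\tau^++\frac p{d_i^-}(\eta+n_i(1-2\eta))\big)$.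 *)

theory Defs
  imports "HOL-Analysis.Analysis"
begin

text \<open>Clusters are given by a labelling c :: 'n => 'k of the nodes; C_i = {j. c j = i}.\<close>

definition csize :: "('n::finite \<Rightarrow> 'k) \<Rightarrow> 'k \<Rightarrow> nat" where
  "csize c i = card {j. c j = i}"

definition Theta :: "('n::finite \<Rightarrow> 'k::finite) \<Rightarrow> real^'k^'n" where
  "Theta c = (\<chi> j i. if c j = i then 1 / sqrt (real (csize c i)) else 0)"

definition EAp :: "real \<Rightarrow> real \<Rightarrow> ('n::finite \<Rightarrow> 'k) \<Rightarrow> real^'n^'n" where
  "EAp p \<eta> c = (\<chi> j j'. if j = j' then 0 else if c j = c j' then p * (1 - \<eta>) else p * \<eta>)"

definition EAm :: "real \<Rightarrow> real \<Rightarrow> ('n::finite \<Rightarrow> 'k) \<Rightarrow> real^'n^'n" where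
  "EAm p \<eta> c = (\<chi> j j'. if j = j' then 0 else if c j = c j' then p * \<eta> else p * (1 - \<eta>))"

definition degmat :: "real^'n^'n \<Rightarrow> real^'n^'n" where
  "degmat A = (\<chi> j j'. if j = j' then (\<Sum>l\<in>UNIV. A $ j $ l) else 0)"

definition psd_mat :: "real^'n^'n \<Rightarrow> bool" where
  "psd_mat S \<longleftrightarrow> (\<forall>x. 0 \<le> x \<bullet> (S *v x))"

definition msqrt :: "real^'n^'n \<Rightarrow> real^'n^'n" where
  "msqrt M = (THE S. transpose S = S \<and> psd_mat S \<and> S ** S = M)"

definition misqrt :: "real^'n^'n \<Rightarrow> real^'n^'n" where
  "misqrt M = matrix_inv (msqrt M)"

definition Lsym :: "real^'n^'n \<Rightarrow> real^'n^'n" where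
  "Lsym A = mat 1 - misqrt (degmat A) ** A ** misqrt (degmat A)"

definition Tbar :: "real \<Rightarrow> real \<Rightarrow> real \<Rightarrow> real \<Rightarrow> ('n::finite \<Rightarrow> 'k) \<Rightarrow> real^'n^'n" where
  "Tbar p \<eta> \<tau>p \<tau>m c =
     misqrt (Lsym (EAm p \<eta> c) + \<tau>p *\<^sub>R mat 1) ** (Lsym (EAp p \<eta> c) + \<tau>m *\<^sub>R mat 1)
       ** misqrt (Lsym (EAm p \<eta> c) + \<tau>p *\<^sub>R mat 1)"

definition sfrac :: "('n::finite \<Rightarrow> 'k) \<Rightarrow> 'k \<Rightarrow> real" where
  "sfrac c i = real (csize c i) / real CARD('n)"

definition dplus :: "real \<Rightarrow> real \<Rightarrow> ('n::finite \<Rightarrow> 'k) \<Rightarrow> 'k \<Rightarrow> real" where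
  "dplus p \<eta> c i = p * (real CARD('n) * (sfrac c i * (1 - 2*\<eta>) + \<eta>) - (1 - \<eta>))"

definition dminus :: "real \<Rightarrow> real \<Rightarrow> ('n::finite \<Rightarrow> 'k) \<Rightarrow> 'k \<Rightarrow> real" where
  "dminus p \<eta> c i = p * (real CARD('n) * (- sfrac c i * (1 - 2*\<eta>) + (1 - \<eta>)) - \<eta>)"

definition uplus :: "real \<Rightarrow> real \<Rightarrow> ('n::finite \<Rightarrow> 'k::finite) \<Rightarrow> real^'k" where
  "uplus p \<eta> c = (\<chi> i. sqrt (real (csize c i) / dplus p \<eta> c i))"

definition uminus :: "real \<Rightarrow> real \<Rightarrow> ('n::finite \<Rightarrow> 'k::finite) \<Rightarrow> real^'k" where
  "uminus p \<eta> c = (\<chi> i. sqrt (real (csize c i) / dminus p \<eta> c i))"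

definition alphap :: "real \<Rightarrow> real \<Rightarrow> real \<Rightarrow> ('n::finite \<Rightarrow> 'k) \<Rightarrow> 'k \<Rightarrow> real" where
  "alphap p \<eta> \<tau>m c i = 1 + \<tau>m + p * (1 - \<eta>) / dplus p \<eta> c i"

definition alpham :: "real \<Rightarrow> real \<Rightarrow> real \<Rightarrow> ('n::finite \<Rightarrow> 'k) \<Rightarrow> 'k \<Rightarrow> real" where
  "alpham p \<eta> \<tau>p c i = 1 + \<tau>p + p * \<eta> / dminus p \<eta> c i"

definition outer :: "real^'a \<Rightarrow> real^'b \<Rightarrow> real^'b^'a" where
  "outer x y = (\<chi> i j. x $ i * y $ j)"

definition Cplus :: "real \<Rightarrow> real \<Rightarrow> real \<Rightarrow> ('n::finite \<Rightarrow> 'k::finite) \<Rightarrow> real^'k^'k" where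
  "Cplus p \<eta> \<tau>m c =
     - (p * \<eta>) *\<^sub>R outer (uplus p \<eta> c) (uplus p \<eta> c)
     + (\<chi> i i'. if i = i' then 1 + \<tau>m + p / dplus p \<eta> c i * (1 - \<eta> - real (csize c i) * (1 - 2*\<eta>)) else 0)"

definition Cminus :: "real \<Rightarrow> real \<Rightarrow> real \<Rightarrow> ('n::finite \<Rightarrow> 'k::finite) \<Rightarrow> real^'k^'k" where
  "Cminus p \<eta> \<tau>p c =
     - (p * (1 - \<eta>)) *\<^sub>R outer (uminus p \<eta> c) (uminus p \<eta> c)
     + (\<chi> i i'. if i = i' then 1 + \<tau>p + p / dminus p \<eta> c i * (\<eta> + real (csize c i) * (1 - 2*\<eta>)) else 0)"

end

theory Submission
  imports Defs
begin



lemma sym_dot: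
  fixes A :: "real^'n^'n"
  assumes "transpose A = A"
  shows "(A *v x) \<bullet> y = x \<bullet> (A *v y)"
proof -
  have "x \<bullet> (A *v y) = (x v* A) \<bullet> y" by (simp add: dot_lmul_matrix)
  also have "x v* A = transpose A *v x" by simp
  finally show ?thesis using assms by simp
qed

lemma quad_zero:
  fixes b c :: real
  assumes "\<forall>t. 2*t*b + t^2*c \<le> 0"
  shows "b = 0"
proof (rule ccontr)
  assume nz: "b \<noteq> 0"
  define t where "t = b / (\<bar>c\<bar> + 1)"
  have "t * b = b^2 / (\<bar>c\<bar> + 1)" unfolding t_def by (simp add: power2_eq_square)
  moreover have "b^2 > 0" using nz by simp
  ultimately have tp: "t * b > 0" by (simp add: add_pos_nonneg)
  have "2*t*b + t^2*c \<le> 0" using assms by blast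
  moreover have "t^2 * \<bar>c\<bar> < t * b"
  proof -
    have "t^2 * \<bar>c\<bar> = t * b * (\<bar>c\<bar> / (\<bar>c\<bar>+1))" unfolding t_def by (simp add: power2_eq_square field_simps)
    also have "\<dots> < t * b" using tp by (simp add: field_simps)
    finally show ?thesis .
  qed
  moreover have "- (t^2 * c) \<le> t^2 * \<bar>c\<bar>" using mult_left_mono[of "-c" "\<bar>c\<bar>" "t^2"] by simp
  ultimately show False using tp by linarith
qed

lemma eigvec_exists:
  fixes A :: "real^'n^'n"
  assumes symA: "transpose A = A" and W: "subspace W" and ne: "W \<noteq> {0}"
    and inv: "\<forall>x\<in>W. A *v x \<in> W"
  shows "\<exists>x\<in>W. norm x = 1 \<and> A *v x = (x \<bullet> (A *v x)) *\<^sub>R x"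
proof -
  define K where "K = W \<inter> sphere 0 1"
  have cK: "compact K" unfolding K_def
    by (simp add: W closed_subspace compact_Int_closed inf_commute closed_Int_compact)
  obtain w where w: "w \<in> W" "w \<noteq> 0" using ne W subspace_0 by blast
  have "w /\<^sub>R norm w \<in> K" unfolding K_def using w W by (simp add: subspace_scale)
  hence neK: "K \<noteq> {}" by blast
  have cont: "continuous_on K (\<lambda>x. x \<bullet> (A *v x))"
    by (intro continuous_intros)
  obtain x0 where x0K: "x0 \<in> K" and mx: "\<forall>y\<in>K. y \<bullet> (A *v y) \<le> x0 \<bullet> (A *v x0)"
    using continuous_attains_sup[OF cK neK cont] by blast
  define l where "l = x0 \<bullet> (A *v x0)"
  have x0W: "x0 \<in> W" and nx0: "norm x0 = 1" using x0K unfolding K_def by auto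
  have x0x0: "x0 \<bullet> x0 = 1" using nx0 by (simp add: norm_eq_1)
  define y where "y = A *v x0 - l *\<^sub>R x0"
  have yW: "y \<in> W" unfolding y_def using W inv x0W by (simp add: subspace_diff subspace_scale)
  have "y \<bullet> x0 = (A *v x0) \<bullet> x0 - l * (x0 \<bullet> x0)" unfolding y_def by (simp add: inner_diff_left)
  also have "(A *v x0) \<bullet> x0 = l" unfolding l_def by (simp add: inner_commute)
  finally have yx0: "y \<bullet> x0 = 0" using x0x0 by simp
  have key: "\<forall>t. 2*t*(y \<bullet> (A *v x0)) + t^2*(y \<bullet> (A *v y) - l * (y \<bullet> y)) \<le> 0"
  proof
    fix t :: real
    define z where "z = x0 + t *\<^sub>R y"
    have zW: "z \<in> W" unfolding z_def using W x0W yW by (simp add: subspace_add subspace_scale)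
    have zz: "z \<bullet> z = 1 + t^2 * (y \<bullet> y)" unfolding z_def
      using x0x0 yx0 by (simp add: inner_add_left inner_add_right inner_commute power2_eq_square)
    have "t^2 * (y \<bullet> y) \<ge> 0" by simp
    hence zpos: "z \<bullet> z > 0" using zz by linarith
    hence nz: "norm z > 0" by (simp add: inner_gt_zero_iff)
    have "z /\<^sub>R norm z \<in> K" unfolding K_def using zW nz W by (simp add: subspace_scale)
    hence "(z /\<^sub>R norm z) \<bullet> (A *v (z /\<^sub>R norm z)) \<le> l" using mx l_def by blast
    hence "(z \<bullet> (A *v z)) / (norm z)^2 \<le> l"
      by (simp add: matrix_vector_mult_scaleR power2_eq_square divide_inverse mult_ac)
    hence q: "z \<bullet> (A *v z) \<le> l * (z \<bullet> z)" using nz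
      by (simp add: divide_le_eq power2_norm_eq_inner)
    have "z \<bullet> (A *v z) = l + 2*t*(y \<bullet> (A *v x0)) + t^2*(y \<bullet> (A *v y))"
    proof -
      have s1: "x0 \<bullet> (A *v y) = y \<bullet> (A *v x0)" using sym_dot[OF symA, of x0 y] by (simp add: inner_commute)
      have "z \<bullet> (A *v z) = x0 \<bullet> (A *v x0) + t * (x0 \<bullet> (A *v y)) + t * (y \<bullet> (A *v x0)) + t * t * (y \<bullet> (A *v y))"
        unfolding z_def by (simp add: matrix_vector_right_distrib matrix_vector_mult_scaleR inner_add_left inner_add_right ring_distribs)
      then show ?thesis using s1 unfolding l_def by (simp add: power2_eq_square)
    qed
    then show "2*t*(y \<bullet> (A *v x0)) + t^2*(y \<bullet> (A *v y) - l * (y \<bullet> y)) \<le> 0"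
      using q zz by (simp add: algebra_simps)
  qed
  have b0: "y \<bullet> (A *v x0) = 0" using quad_zero[OF key] .
  have "y \<bullet> (A *v x0) = y \<bullet> y + l * (y \<bullet> x0)"
    unfolding y_def by (simp add: inner_diff_left inner_diff_right algebra_simps)
  hence "y \<bullet> y = 0" using b0 yx0 by simp
  hence "y = 0" by simp
  hence "A *v x0 = l *\<^sub>R x0" unfolding y_def by simp
  thus ?thesis using x0W nx0 l_def by blast
qed




lemma outer_mv: "outer a b *v x = (b \<bullet> x) *\<^sub>R a"
  by (simp add: vec_eq_iff outer_def matrix_vector_mult_def inner_vec_def sum_distrib_left mult_ac)

lemma sum_mv: "(\<Sum>i\<in>I. M i) *v (x::real^'n) = (\<Sum>i\<in>I. M i *v x)"
  by (induct I rule: infinite_finite_induct) (auto simp: matrix_vector_mult_add_rdistrib)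

lemma mv_sum: "(M::real^'n^'m) *v (\<Sum>i\<in>I. x i) = (\<Sum>i\<in>I. M *v x i)"
  by (induct I rule: infinite_finite_induct) (auto simp: matrix_vector_right_distrib)

lemma scaleR_mv: "(a *\<^sub>R (M::real^'n^'m)) *v x = a *\<^sub>R (M *v x)"
  by (simp add: scaleR_matrix_vector_assoc)

lemma orth_coef:
  fixes B :: "(real^'n) set"
  assumes "finite B" "b' \<in> B" "\<forall>b\<in>B. norm b = 1" "\<forall>b\<in>B. \<forall>b'\<in>B. b \<noteq> b' \<longrightarrow> b \<bullet> b' = 0"
  shows "b' \<bullet> (\<Sum>b\<in>B. c b *\<^sub>R b) = c b'"
proof -
  have "b' \<bullet> (\<Sum>b\<in>B. c b *\<^sub>R b) = (\<Sum>b\<in>B. c b * (b' \<bullet> b))" by (simp add: inner_sum_right)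
  also have "\<dots> = (\<Sum>b\<in>B. if b = b' then c b else 0)"
  proof (rule sum.cong)
    fix b assume "b \<in> B"
    then show "c b * (b' \<bullet> b) = (if b = b' then c b else 0)"
      using assms by (auto simp: norm_eq_1)
  qed simp
  also have "\<dots> = c b'" using assms by (simp add: sum.delta')
  finally show ?thesis .
qed

lemma eigbasis:
  fixes A :: "real^'n^'n"
  assumes symA: "transpose A = A"
  shows "subspace W \<Longrightarrow> (\<forall>x\<in>W. A *v x \<in> W) \<Longrightarrow>
    \<exists>B. finite B \<and> B \<subseteq> W \<and> (\<forall>b\<in>B. norm b = 1 \<and> A *v b = (b \<bullet> (A *v b)) *\<^sub>R b)
      \<and> (\<forall>b\<in>B. \<forall>b'\<in>B. b \<noteq> b' \<longrightarrow> b \<bullet> b' = 0) \<and> (\<forall>x\<in>W. x = (\<Sum>b\<in>B. (b \<bullet> x) *\<^sub>R b))"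
proof (induction "dim W" arbitrary: W rule: less_induct)
  case less
  show ?case
  proof (cases "W = {0}")
    case True
    show ?thesis by (rule exI[of _ "{}"]) (simp add: True)
  next
    case False
    obtain x0 where x0W: "x0 \<in> W" and nx0: "norm x0 = 1" and ex0: "A *v x0 = (x0 \<bullet> (A *v x0)) *\<^sub>R x0"
      using eigvec_exists[OF symA less.prems(1) False less.prems(2)] by blast
    define l where "l = x0 \<bullet> (A *v x0)"
    have x0x0: "x0 \<bullet> x0 = 1" using nx0 by (simp add: norm_eq_1)
    define W' where "W' = {y\<in>W. x0 \<bullet> y = 0}"
    have sW': "subspace W'" using less.prems(1) unfolding W'_def subspace_def
      by (auto simp: inner_add_right)
    have iW': "\<forall>x\<in>W'. A *v x \<in> W'"
    proof
      fix y assume y: "y \<in> W'"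
      have "x0 \<bullet> (A *v y) = (A *v x0) \<bullet> y" using sym_dot[OF symA, of x0 y] by simp
      also have "\<dots> = ((x0 \<bullet> (A *v x0)) *\<^sub>R x0) \<bullet> y" by (rule arg_cong[where f="\<lambda>z. z \<bullet> y", OF ex0])
      also have "\<dots> = 0" using y unfolding W'_def by simp
      finally show "A *v y \<in> W'" using y less.prems(2) unfolding W'_def by auto
    qed
    have "W' \<subseteq> W" unfolding W'_def by auto
    moreover have "x0 \<in> W - W'" unfolding W'_def using x0W x0x0 by auto
    ultimately have "W' \<subset> W" by blast
    moreover have "span W' = W'" using sW' by simp
    moreover have "span W = W" using less.prems(1) by simp
    ultimately have "dim W' < dim W" using dim_psubset[of W' W] by argo
    from less.hyps[OF this sW' iW'] obtain B' where
      B': "finite B'" "B' \<subseteq> W'" "\<forall>b\<in>B'. norm b = 1 \<and> A *v b = (b \<bullet> (A *v b)) *\<^sub>R b"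
        "\<forall>b\<in>B'. \<forall>b'\<in>B'. b \<noteq> b' \<longrightarrow> b \<bullet> b' = 0" "\<forall>x\<in>W'. x = (\<Sum>b\<in>B'. (b \<bullet> x) *\<^sub>R b)"
      by blast
    have x0B': "x0 \<notin> B'" using B'(2) x0x0 unfolding W'_def by auto
    have orth0: "\<forall>b\<in>B'. b \<bullet> x0 = 0" using B'(2) unfolding W'_def by (auto simp: inner_commute)
    show ?thesis
    proof (rule exI[of _ "insert x0 B'"], intro conjI)
      show "finite (insert x0 B')" using B' by simp
      show "insert x0 B' \<subseteq> W" using B'(2) x0W unfolding W'_def by auto
      show "\<forall>b\<in>insert x0 B'. norm b = 1 \<and> A *v b = (b \<bullet> (A *v b)) *\<^sub>R b"
        using B'(3) nx0 ex0 by auto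
      show "\<forall>b\<in>insert x0 B'. \<forall>b'\<in>insert x0 B'. b \<noteq> b' \<longrightarrow> b \<bullet> b' = 0"
        using B'(4) orth0 by (auto simp: inner_commute)
      show "\<forall>x\<in>W. x = (\<Sum>b\<in>insert x0 B'. (b \<bullet> x) *\<^sub>R b)"
      proof
        fix x assume xW: "x \<in> W"
        define x' where "x' = x - (x0 \<bullet> x) *\<^sub>R x0"
        have "x' \<in> W'" unfolding W'_def x'_def using xW x0W less.prems(1) x0x0
          by (simp add: subspace_diff subspace_scale inner_diff_right)
        hence ex: "x' = (\<Sum>b\<in>B'. (b \<bullet> x') *\<^sub>R b)" using B'(5) by blast
        have "(\<Sum>b\<in>B'. (b \<bullet> x') *\<^sub>R b) = (\<Sum>b\<in>B'. (b \<bullet> x) *\<^sub>R b)"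
          by (rule sum.cong) (use orth0 in \<open>auto simp: x'_def inner_diff_right\<close>)
        hence "x = (x0 \<bullet> x) *\<^sub>R x0 + (\<Sum>b\<in>B'. (b \<bullet> x) *\<^sub>R b)" using ex unfolding x'_def
          by (simp add: algebra_simps)
        thus "x = (\<Sum>b\<in>insert x0 B'. (b \<bullet> x) *\<^sub>R b)" using B'(1) x0B' by simp
      qed
    qed
  qed
qed

lemma eigbasis_univ:
  fixes A :: "real^'n^'n"
  assumes symA: "transpose A = A"
  obtains B where "finite B" "\<forall>b\<in>B. norm b = 1 \<and> A *v b = (b \<bullet> (A *v b)) *\<^sub>R b"
      "\<forall>b\<in>B. \<forall>b'\<in>B. b \<noteq> b' \<longrightarrow> b \<bullet> b' = 0" "\<forall>x. x = (\<Sum>b\<in>B. (b \<bullet> x) *\<^sub>R b)"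
  using eigbasis[OF symA, of UNIV] by auto

lemma psd_root_exists:
  fixes A :: "real^'n^'n"
  assumes symA: "transpose A = A" and psdA: "psd_mat A"
  shows "\<exists>S. transpose S = S \<and> psd_mat S \<and> S ** S = A"
proof -
  obtain B where B: "finite B" "\<forall>b\<in>B. norm b = 1 \<and> A *v b = (b \<bullet> (A *v b)) *\<^sub>R b"
      "\<forall>b\<in>B. \<forall>b'\<in>B. b \<noteq> b' \<longrightarrow> b \<bullet> b' = 0" "\<forall>x. x = (\<Sum>b\<in>B. (b \<bullet> x) *\<^sub>R b)"
    using eigbasis_univ[OF symA] by blast
  define lam where "lam b = b \<bullet> (A *v b)" for b
  have lam0: "lam b \<ge> 0" for b using psdA unfolding psd_mat_def lam_def by blast
  define S where "S = (\<Sum>b\<in>B. sqrt (lam b) *\<^sub>R outer b b)"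
  have Sx: "S *v x = (\<Sum>b\<in>B. (sqrt (lam b) * (b \<bullet> x)) *\<^sub>R b)" for x
    unfolding S_def sum_mv scaleR_mv outer_mv by simp
  have Sent: "S $ i $ j = (\<Sum>b\<in>B. sqrt (lam b) * (b $ i * b $ j))" for i j
    unfolding S_def by (simp add: outer_def)
  have symS: "transpose S = S"
    by (simp add: vec_eq_iff transpose_def Sent mult.commute)
  have psdS: "psd_mat S" unfolding psd_mat_def
  proof
    fix x
    have "x \<bullet> (S *v x) = (\<Sum>b\<in>B. sqrt (lam b) * (b \<bullet> x)^2)"
      unfolding Sx by (simp add: inner_sum_right inner_commute power2_eq_square mult.assoc)
    also have "\<dots> \<ge> 0" by (intro sum_nonneg) (simp add: lam0)
    finally show "0 \<le> x \<bullet> (S *v x)" .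
  qed
  have "(S ** S) *v x = A *v x" for x
  proof -
    have "(S ** S) *v x = S *v (S *v x)" by (simp add: matrix_vector_mul_assoc)
    also have "\<dots> = (\<Sum>b\<in>B. (sqrt (lam b) * (b \<bullet> (S *v x))) *\<^sub>R b)" by (rule Sx)
    also have "\<dots> = (\<Sum>b\<in>B. (lam b * (b \<bullet> x)) *\<^sub>R b)"
    proof (rule sum.cong)
      fix b assume bB: "b \<in> B"
      have "b \<bullet> (S *v x) = sqrt (lam b) * (b \<bullet> x)" unfolding Sx
        by (rule orth_coef) (use B bB in auto)
      then show "(sqrt (lam b) * (b \<bullet> (S *v x))) *\<^sub>R b = (lam b * (b \<bullet> x)) *\<^sub>R b"
        using lam0[of b] by (simp add: mult.assoc[symmetric])
    qed simp
    also have "\<dots> = (\<Sum>b\<in>B. (b \<bullet> x) *\<^sub>R (A *v b))"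
    proof (rule sum.cong)
      fix b assume "b \<in> B"
      hence eb: "A *v b = lam b *\<^sub>R b" using B(2) unfolding lam_def by blast
      show "(lam b * (b \<bullet> x)) *\<^sub>R b = (b \<bullet> x) *\<^sub>R (A *v b)" unfolding eb by (simp add: mult.commute)
    qed simp
    also have "\<dots> = A *v (\<Sum>b\<in>B. (b \<bullet> x) *\<^sub>R b)"
      by (simp add: mv_sum matrix_scaleR_vector_ac scaleR_matrix_vector_assoc[symmetric])
    also have "\<dots> = A *v x" using B(4) by metis
    finally show ?thesis .
  qed
  hence "S ** S = A" by (simp add: matrix_eq)
  thus ?thesis using symS psdS by blast
qed

lemma psd_root_unique:
  fixes S S' :: "real^'n^'n"
  assumes sS: "transpose S = S" and pS: "psd_mat S" and sS': "transpose S' = S'" and pS': "psd_mat S'"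
    and eq: "S ** S = S' ** S'"
  shows "S = S'"
proof -
  obtain B where B: "finite B" "\<forall>b\<in>B. norm b = 1 \<and> S' *v b = (b \<bullet> (S' *v b)) *\<^sub>R b"
      "\<forall>b\<in>B. \<forall>b'\<in>B. b \<noteq> b' \<longrightarrow> b \<bullet> b' = 0" "\<forall>x. x = (\<Sum>b\<in>B. (b \<bullet> x) *\<^sub>R b)"
    using eigbasis_univ[OF sS'] by blast
  have beq: "S *v b = S' *v b" if bB: "b \<in> B" for b
  proof -
    define mu where "mu = b \<bullet> (S' *v b)"
    have mu0: "mu \<ge> 0" using pS' unfolding psd_mat_def mu_def by blast
    have eb: "S' *v b = mu *\<^sub>R b" using B bB unfolding mu_def by blast
    have "S *v (S *v b) = S' *v (S' *v b)" using eq by (simp add: matrix_vector_mul_assoc)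
    also have "\<dots> = (mu * mu) *\<^sub>R b" using eb by (simp add: matrix_scaleR_vector_ac scaleR_matrix_vector_assoc[symmetric])
    finally have SSb: "S *v (S *v b) = (mu * mu) *\<^sub>R b" .
    define w where "w = S *v b - mu *\<^sub>R b"
    have "S *v w + mu *\<^sub>R w = 0" unfolding w_def using SSb
      by (simp add: matrix_vector_mult_diff_distrib matrix_scaleR_vector_ac scaleR_matrix_vector_assoc[symmetric] algebra_simps)
    hence "w \<bullet> (S *v w) + mu * (w \<bullet> w) = 0" by (metis inner_add_right inner_scaleR_right inner_zero_right)
    moreover have "w \<bullet> (S *v w) \<ge> 0" using pS unfolding psd_mat_def by blast
    moreover have "mu * (w \<bullet> w) \<ge> 0" using mu0 by simp
    ultimately have z1: "mu * (w \<bullet> w) = 0" by linarith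
    have "w = 0"
    proof (cases "mu = 0")
      case True
      hence "w = S *v b" unfolding w_def by simp
      hence "w \<bullet> w = b \<bullet> (S *v (S *v b))" using sym_dot[OF sS, of b "S *v b"] by simp
      also have "\<dots> = 0" using SSb True by simp
      finally show ?thesis by simp
    next
      case False
      then show ?thesis using z1 by simp
    qed
    thus ?thesis unfolding w_def using eb by simp
  qed
  have "S *v x = S' *v x" for x
  proof -
    have "S *v x = S *v (\<Sum>b\<in>B. (b \<bullet> x) *\<^sub>R b)" using B(4) by metis
    also have "\<dots> = (\<Sum>b\<in>B. (b \<bullet> x) *\<^sub>R (S *v b))" by (simp add: mv_sum matrix_scaleR_vector_ac scaleR_matrix_vector_assoc[symmetric])
    also have "\<dots> = (\<Sum>b\<in>B. (b \<bullet> x) *\<^sub>R (S' *v b))" using beq by simp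
    also have "\<dots> = S' *v (\<Sum>b\<in>B. (b \<bullet> x) *\<^sub>R b)" by (simp add: mv_sum matrix_scaleR_vector_ac scaleR_matrix_vector_assoc[symmetric])
    also have "\<dots> = S' *v x" using B(4) by metis
    finally show ?thesis .
  qed
  thus ?thesis by (simp add: matrix_eq)
qed

lemma msqrt_eq:
  fixes S M :: "real^'n^'n"
  assumes "transpose S = S" "psd_mat S" "S ** S = M"
  shows "msqrt M = S"
  unfolding msqrt_def
  by (rule the_equality) (use assms psd_root_unique in auto)

lemma msqrt_props:
  fixes M :: "real^'n^'n"
  assumes "transpose M = M" "psd_mat M"
  shows "transpose (msqrt M) = msqrt M \<and> psd_mat (msqrt M) \<and> msqrt M ** msqrt M = M"
  using psd_root_exists[OF assms] msqrt_eq by metis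

lemma matrix_inv_eq:
  fixes A B :: "real^'n^'n"
  assumes "A ** B = mat 1"
  shows "matrix_inv A = B"
proof -
  have BA: "B ** A = mat 1" using assms matrix_left_right_inverse by blast
  have "A ** matrix_inv A = mat 1 \<and> matrix_inv A ** A = mat 1"
    unfolding matrix_inv_def by (rule someI[of _ B]) (use assms BA in auto)
  hence "matrix_inv A ** A = mat 1" by blast
  hence "matrix_inv A ** A ** B = B" by simp
  thus ?thesis using assms by (simp add: matrix_mul_assoc[symmetric])
qed




declare transpose_matrix_vector[simp del]

lemma sum_if_card:
  fixes c :: "'n::finite \<Rightarrow> 'k"
  shows "(\<Sum>j\<in>UNIV. if c j = i then a else 0) = real (csize c i) * (a::real)"
proof -
  have "(\<Sum>j\<in>UNIV. if c j = i then a else 0) = (\<Sum>j\<in>{j\<in>UNIV. c j = i}. a)"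
    by (rule sum.inter_filter[symmetric]) simp
  thus ?thesis by (simp add: csize_def)
qed

lemma inner_mv_transpose: "(x::real^'m) \<bullet> ((A::real^'n^'m) *v y) = (transpose A *v x) \<bullet> y"
  by (metis dot_lmul_matrix transpose_matrix_vector)

locale ssbm =
  fixes c :: "'n::finite \<Rightarrow> 'k::finite" and v :: "nat \<Rightarrow> real^'n" and g :: "nat \<Rightarrow> 'k" and N :: nat
  assumes surjc: "surj c"
   and orthon: "\<forall>m<N. \<forall>m'<N. v m \<bullet> v m' = (if m = m' then 1 else 0)"
   and sperp: "span (v ` {..<N}) = {x. \<forall>y \<in> span (columns (Theta c)). x \<bullet> y = 0}"
   and supp: "\<forall>m<N. \<forall>j. v m $ j \<noteq> 0 \<longrightarrow> c j = g m"
begin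

abbreviation "Th \<equiv> Theta c"

definition F :: "('k \<Rightarrow> real) \<Rightarrow> real^'n^'n" where
  "F f = (\<Sum>m<N. f (g m) *\<^sub>R outer (v m) (v m))"

definition blk :: "real^'k^'k \<Rightarrow> ('k \<Rightarrow> real) \<Rightarrow> real^'n^'n" where
  "blk X f = Th ** X ** transpose Th + F f"

lemma csize_pos: "csize c i > 0"
proof -
  obtain j where "c j = i" using surjc by (metis surjD)
  hence "{j. c j = i} \<noteq> {}" by blast
  thus ?thesis unfolding csize_def by (simp add: card_gt_0_iff)
qed

lemma Th_ent: "Th $ j $ i = (if c j = i then 1 / sqrt (real (csize c i)) else 0)"
  by (simp add: Theta_def)

lemma ThTh: "transpose Th ** Th = mat 1"
proof -
  have "(transpose Th ** Th) $ i $ l = mat 1 $ i $ l" for i l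
  proof -
    have "(transpose Th ** Th) $ i $ l = (\<Sum>j\<in>UNIV. Th $ j $ i * Th $ j $ l)"
      by (simp add: matrix_matrix_mult_def transpose_def)
    also have "\<dots> = (\<Sum>j\<in>UNIV. if c j = i then (if i = l then 1 / real (csize c i) else 0) else 0)"
      by (rule sum.cong) (auto simp: Th_ent)
    also have "\<dots> = real (csize c i) * (if i = l then 1 / real (csize c i) else 0)" by (rule sum_if_card)
    also have "\<dots> = mat 1 $ i $ l" using csize_pos[of i] by (cases "i = l") (simp_all add: mat_def)
    finally show ?thesis .
  qed
  thus ?thesis by (simp add: vec_eq_iff)
qed

lemma Th_mv_Th: "transpose Th *v (Th *v z) = z"
  by (simp add: matrix_vector_mul_assoc ThTh)

lemma v_perp: "m < N \<Longrightarrow> transpose Th *v v m = 0"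
proof -
  assume m: "m < N"
  have "v m \<in> span (v ` {..<N})" using m by (intro span_base) auto
  hence perp: "\<forall>y \<in> span (columns Th). v m \<bullet> y = 0" using sperp by blast
  have e: "(transpose Th *v v m) $ i = column i Th \<bullet> v m" for i
    by (simp add: matrix_vector_mult_def transpose_def column_def inner_vec_def mult.commute)
  have "column i Th \<in> span (columns Th)" for i
    by (intro span_base) (auto simp: columns_def)
  hence "v m \<bullet> column i Th = 0" for i using perp by blast
  hence "(transpose Th *v v m) $ i = 0" for i unfolding e by (simp only: inner_commute)
  thus ?thesis by (simp add: vec_eq_iff)
qed

lemma v_Th: "m < N \<Longrightarrow> v m \<bullet> (Th *v z) = 0"
  using v_perp by (simp add: inner_mv_transpose)

lemma F_mv: "F f *v x = (\<Sum>m<N. (f (g m) * (v m \<bullet> x)) *\<^sub>R v m)"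
  unfolding F_def sum_mv scaleR_mv outer_mv by simp

lemma v_sum: "m' < N \<Longrightarrow> v m' \<bullet> (\<Sum>m<N. a m *\<^sub>R v m) = a m'"
proof -
  assume m': "m' < N"
  have "v m' \<bullet> (\<Sum>m<N. a m *\<^sub>R v m) = (\<Sum>m<N. a m * (v m' \<bullet> v m))"
    by (simp add: inner_sum_right)
  also have "\<dots> = (\<Sum>m<N. if m = m' then a m else 0)"
    by (rule sum.cong) (use orthon m' in auto)
  also have "\<dots> = a m'" using m' by (simp add: sum.delta')
  finally show ?thesis .
qed

lemma Th_sum: "transpose Th *v (\<Sum>m<N. a m *\<^sub>R v m) = 0"
  by (simp add: mv_sum matrix_scaleR_vector_ac scaleR_matrix_vector_assoc[symmetric] v_perp)

lemma complete: "x = Th *v (transpose Th *v x) + (\<Sum>m<N. (v m \<bullet> x) *\<^sub>R v m)"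
proof -
  define r where "r = x - Th *v (transpose Th *v x) - (\<Sum>m<N. (v m \<bullet> x) *\<^sub>R v m)"
  have Tr: "transpose Th *v r = 0" unfolding r_def
    by (simp add: matrix_vector_mult_diff_distrib Th_mv_Th Th_sum)
  have "r \<bullet> y = 0" if "y \<in> span (columns Th)" for y
  proof -
    have "orthogonal r y"
    proof (rule orthogonal_to_span[OF that])
      fix y' assume "y' \<in> columns Th"
      then obtain i where y': "y' = column i Th" unfolding columns_def by blast
      have "(transpose Th *v r) $ i = column i Th \<bullet> r"
        by (simp add: matrix_vector_mult_def transpose_def column_def inner_vec_def mult.commute)
      thus "orthogonal r y'" using Tr y' by (simp add: orthogonal_def inner_commute)
    qed
    thus ?thesis by (simp add: orthogonal_def)
  qed
  hence rspan: "r \<in> span (v ` {..<N})" using sperp by blast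
  have "orthogonal r r"
  proof (rule orthogonal_to_span[OF rspan])
    fix y assume "y \<in> v ` {..<N}"
    then obtain m where m: "m < N" "y = v m" by blast
    have "v m \<bullet> r = 0" unfolding r_def using m
      by (simp add: inner_diff_right v_Th v_sum)
    thus "orthogonal r y" using m by (simp add: orthogonal_def inner_commute)
  qed
  hence "r = 0" by (simp add: orthogonal_def)
  thus ?thesis unfolding r_def by (simp add: algebra_simps)
qed

lemma blk_mv: "blk X f *v x = Th *v (X *v (transpose Th *v x)) + F f *v x"
  unfolding blk_def by (simp add: matrix_vector_mult_add_rdistrib matrix_vector_mul_assoc matrix_mul_assoc)

lemma ThT_F: "transpose Th *v (F f *v x) = 0"
  unfolding F_mv by (rule Th_sum)

lemma F_Th: "F f *v (Th *v z) = 0"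
  unfolding F_mv by (simp add: v_Th)

lemma F_F: "F f *v (F h *v x) = F (\<lambda>i. f i * h i) *v x"
proof -
  have "F f *v (F h *v x) = (\<Sum>m<N. (f (g m) * (v m \<bullet> (F h *v x))) *\<^sub>R v m)" by (rule F_mv)
  also have "\<dots> = (\<Sum>m<N. (f (g m) * h (g m) * (v m \<bullet> x)) *\<^sub>R v m)"
    by (rule sum.cong) (simp_all add: F_mv v_sum mult.assoc)
  also have "\<dots> = F (\<lambda>i. f i * h i) *v x" by (simp add: F_mv)
  finally show ?thesis .
qed

lemma blk_mul: "blk X f ** blk Y h = blk (X ** Y) (\<lambda>i. f i * h i)"
proof -
  have "(blk X f ** blk Y h) *v x = blk (X ** Y) (\<lambda>i. f i * h i) *v x" for x
  proof -
    have "(blk X f ** blk Y h) *v x = blk X f *v (blk Y h *v x)" by (simp add: matrix_vector_mul_assoc)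
    also have "\<dots> = Th *v (X *v (Y *v (transpose Th *v x))) + F (\<lambda>i. f i * h i) *v x"
      by (simp add: blk_mv matrix_vector_right_distrib Th_mv_Th ThT_F F_Th F_F)
    also have "\<dots> = blk (X ** Y) (\<lambda>i. f i * h i) *v x"
      by (simp add: blk_mv matrix_vector_mul_assoc matrix_mul_assoc)
    finally show ?thesis .
  qed
  thus ?thesis by (simp add: matrix_eq)
qed

lemma blk_id: "blk (mat 1) (\<lambda>_. 1) = mat 1"
proof -
  have "blk (mat 1) (\<lambda>_. 1) *v x = mat 1 *v x" for x
    using complete[of x] by (simp add: blk_mv F_mv)
  thus ?thesis by (simp add: matrix_eq)
qed

lemma F_ent: "F f $ i $ j = (\<Sum>m<N. f (g m) * (v m $ i * v m $ j))"
  unfolding F_def by (simp add: outer_def)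

lemma blk_transpose: "transpose (blk X f) = blk (transpose X) f"
proof -
  have tF: "transpose (F f) = F f" by (simp add: vec_eq_iff transpose_def F_ent mult.commute)
  have t1: "transpose (Th ** X ** transpose Th) = Th ** transpose X ** transpose Th"
    by (simp add: matrix_transpose_mul matrix_mul_assoc)
  have tadd: "transpose (A + B) = transpose A + transpose B" for A B :: "real^'n^'n"
    by (simp add: vec_eq_iff transpose_def)
  show ?thesis unfolding blk_def tadd t1 tF ..
qed

lemma blk_psd:
  assumes "psd_mat X" "\<forall>i. f i \<ge> 0"
  shows "psd_mat (blk X f)"
  unfolding psd_mat_def
proof
  fix x
  have a1: "x \<bullet> (Th *v (X *v (transpose Th *v x))) = (transpose Th *v x) \<bullet> (X *v (transpose Th *v x))"
    by (rule inner_mv_transpose)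
  have a2: "x \<bullet> (F f *v x) = (\<Sum>m<N. f (g m) * (v m \<bullet> x)^2)"
    unfolding F_mv inner_sum_right inner_scaleR_right
    by (rule sum.cong) (simp_all add: inner_commute[of x] power2_eq_square mult.assoc)
  have "x \<bullet> (blk X f *v x) = (transpose Th *v x) \<bullet> (X *v (transpose Th *v x)) + (\<Sum>m<N. f (g m) * (v m \<bullet> x)^2)"
    unfolding blk_mv inner_add_right a1 a2 ..
  moreover have "(transpose Th *v x) \<bullet> (X *v (transpose Th *v x)) \<ge> 0" using assms(1) unfolding psd_mat_def by blast
  moreover have "(\<Sum>m<N. f (g m) * (v m \<bullet> x)^2) \<ge> 0" using assms(2) by (intro sum_nonneg) simp
  ultimately show "0 \<le> x \<bullet> (blk X f *v x)" by linarith
qed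

lemma blk_compress: "transpose Th ** blk X f ** Th = X"
proof -
  have "(transpose Th ** blk X f ** Th) *v z = X *v z" for z
    by (simp add: matrix_vector_mul_assoc[symmetric] blk_mv matrix_vector_right_distrib Th_mv_Th ThT_F F_Th)
  thus ?thesis by (simp add: matrix_eq)
qed

lemma ThXTh_ent: "(Th ** X ** transpose Th) $ j $ l = X $ c j $ c l / (sqrt (real (csize c (c j))) * sqrt (real (csize c (c l))))"
  by (simp add: matrix_matrix_mult_def transpose_def Theta_def if_distrib if_distribR sum.delta' cong: if_cong)

lemma ThTT_ent: "(Th ** transpose Th) $ j $ l = (if c j = c l then 1 / real (csize c (c j)) else 0)"
proof (cases "c j = c l")
  case True
  have "(Th ** transpose Th) $ j $ l = 1 / (sqrt (real (csize c (c j))) * sqrt (real (csize c (c j))))"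
    using ThXTh_ent[of "mat 1" j l, unfolded matrix_mul_rid] True by (simp add: mat_def)
  also have "\<dots> = 1 / real (csize c (c j))" by simp
  finally show ?thesis using True by simp
next
  case False
  then show ?thesis using ThXTh_ent[of "mat 1" j l, unfolded matrix_mul_rid] by (simp add: mat_def)
qed

lemma F_ent2: "F f $ j $ l = f (c j) * ((if j = l then 1 else 0) - (if c j = c l then 1 / real (csize c (c j)) else 0))"
proof -
  have e1: "F f $ j $ l = (\<Sum>m<N. f (c j) * (v m $ j * v m $ l))"
    unfolding F_ent
  proof (rule sum.cong)
    fix m assume "m \<in> {..<N}"
    hence m: "m < N" by simp
    show "f (g m) * (v m $ j * v m $ l) = f (c j) * (v m $ j * v m $ l)"
    proof (cases "v m $ j = 0")
      case False
      then have "c j = g m" using supp m by blast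
      then show ?thesis by simp
    qed simp
  qed simp
  have e2: "(\<Sum>m<N. f (c j) * (v m $ j * v m $ l)) = f (c j) * (\<Sum>m<N. (v m \<bullet> axis l 1) * v m $ j)"
    unfolding sum_distrib_left
  proof (rule sum.cong)
    fix m
    have "v m \<bullet> axis l 1 = v m $ l" by (simp add: inner_axis)
    then show "f (c j) * (v m $ j * v m $ l) = f (c j) * (v m \<bullet> axis l 1 * v m $ j)"
      by (simp only: mult.commute[of "v m $ j"])
  qed simp
  have e3: "(\<Sum>m<N. (v m \<bullet> axis l 1) * v m $ j) = (axis l 1 :: real^'n) $ j - (Th *v (transpose Th *v axis l 1)) $ j"
  proof -
    have h: "(axis l 1 :: real^'n) $ j = (Th *v (transpose Th *v axis l 1) + (\<Sum>m<N. (v m \<bullet> axis l 1) *\<^sub>R v m)) $ j"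
      by (rule arg_cong[where f="\<lambda>z. z $ j"], rule complete)
    have h2: "(Th *v (transpose Th *v axis l 1) + (\<Sum>m<N. (v m \<bullet> axis l 1) *\<^sub>R v m)) $ j
       = (Th *v (transpose Th *v axis l 1)) $ j + (\<Sum>m<N. (v m \<bullet> axis l 1) * v m $ j)" by simp
    show ?thesis using h h2 by linarith
  qed
  have e4: "(Th *v (transpose Th *v axis l 1)) $ j = (Th ** transpose Th) $ j $ l"
    by (subst matrix_vector_mul_assoc) (simp add: matrix_vector_mult_basis column_def)
  have e5: "(axis l 1 :: real^'n) $ j = (if j = l then 1 else 0)" by (simp add: axis_def)
  have "F f $ j $ l = f (c j) * (\<Sum>m<N. (v m \<bullet> axis l 1) * v m $ j)" using e1 e2 by (rule trans)
  also have "\<dots> = f (c j) * ((axis l 1 :: real^'n) $ j - (Th *v (transpose Th *v axis l 1)) $ j)"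
    using e3 by (rule arg_cong)
  also have "\<dots> = f (c j) * ((if j = l then 1 else 0) - (if c j = c l then 1 / real (csize c (c j)) else 0))"
    by (simp only: e4 e5 ThTT_ent)
  finally show ?thesis .
qed

end



definition dg :: "('n::finite \<Rightarrow> real) \<Rightarrow> real^'n^'n" where
  "dg a = (\<chi> j l. if j = l then a j else 0)"

lemma dg_mv: "dg a *v x = (\<chi> j. a j * x $ j)"
  by (simp add: vec_eq_iff dg_def matrix_vector_mult_def if_distrib if_distribR cong: if_cong)

lemma dg_mul: "dg a ** dg b = dg (\<lambda>j. a j * b j)"
  by (simp add: matrix_eq matrix_vector_mul_assoc[symmetric] dg_mv mult.assoc)

lemma dg_sym: "transpose (dg a) = dg a"
  by (simp add: vec_eq_iff dg_def transpose_def)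

lemma dg_psd:
  fixes a :: "'n::finite \<Rightarrow> real"
  assumes a: "\<forall>j. a j \<ge> 0"
  shows "psd_mat (dg a)"
  unfolding psd_mat_def
proof
  fix x :: "real^'n"
  have "x \<bullet> (dg a *v x) = (\<Sum>i\<in>UNIV. a i * (x $ i * x $ i))" by (simp add: dg_mv inner_vec_def mult.left_commute)
  also have "\<dots> \<ge> 0" using a by (intro sum_nonneg) simp
  finally show "0 \<le> x \<bullet> (dg a *v x)" .
qed

lemma msqrt_dg: "\<forall>j. a j \<ge> 0 \<Longrightarrow> msqrt (dg a) = dg (\<lambda>j. sqrt (a j))"
  by (rule msqrt_eq) (simp_all add: dg_sym dg_psd dg_mul)

lemma misqrt_dg: "\<forall>j. a j > 0 \<Longrightarrow> misqrt (dg a) = dg (\<lambda>j. 1 / sqrt (a j))"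
proof -
  assume a: "\<forall>j. a j > 0"
  have "msqrt (dg a) = dg (\<lambda>j. sqrt (a j))" using a by (simp add: msqrt_dg less_imp_le)
  moreover have "dg (\<lambda>j. sqrt (a j)) ** dg (\<lambda>j. 1 / sqrt (a j)) = mat 1"
  proof -
    have nz: "\<forall>j. a j \<noteq> 0" using a by (metis less_irrefl)
    show ?thesis using a by (simp add: dg_mul) (simp add: dg_def mat_def nz)
  qed
  ultimately show ?thesis unfolding misqrt_def by (simp add: matrix_inv_eq)
qed

lemma dg_A_dg: "(dg a ** A ** dg b) $ j $ l = a j * A $ j $ l * b l"
  by (simp add: dg_def matrix_matrix_mult_def if_distrib if_distribR sum.delta sum.delta' cong: if_cong)

lemma degmat_dg: "degmat A = dg (\<lambda>j. \<Sum>l\<in>UNIV. A $ j $ l)"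
  by (simp add: degmat_def dg_def)

lemma Lsym_ent:
  assumes "\<forall>j. (\<Sum>l\<in>UNIV. A $ j $ l) > 0"
  shows "Lsym A $ j $ l = (if j = l then 1 else 0) - A $ j $ l / (sqrt (\<Sum>l\<in>UNIV. A $ j $ l) * sqrt (\<Sum>l'\<in>UNIV. A $ l $ l'))"
proof -
  have "Lsym A = mat 1 - dg (\<lambda>j. 1 / sqrt (\<Sum>l\<in>UNIV. A $ j $ l)) ** A ** dg (\<lambda>j. 1 / sqrt (\<Sum>l\<in>UNIV. A $ j $ l))"
    unfolding Lsym_def degmat_dg using misqrt_dg assms by metis
  thus ?thesis by (simp add: dg_A_dg mat_def)
qed

lemma lap_psd:
  fixes A :: "real^'n^'n"
  assumes sym: "\<forall>j l. A $ j $ l = A $ l $ j" and nn: "\<forall>j l. A $ j $ l \<ge> 0"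
    and dp: "\<forall>j. (\<Sum>l\<in>UNIV. A $ j $ l) > 0"
  shows "psd_mat (Lsym A)"
  unfolding psd_mat_def
proof
  fix x :: "real^'n"
  define d where "d j = (\<Sum>l\<in>UNIV. A $ j $ l)" for j
  define y where "y j = x $ j / sqrt (d j)" for j
  have dpos: "d j > 0" for j using dp d_def by simp
  have Le: "Lsym A $ j $ l = (if j = l then 1 else 0) - A $ j $ l / (sqrt (d j) * sqrt (d l))" for j l
    using Lsym_ent[OF dp] d_def by simp
  have xj: "x $ j = sqrt (d j) * y j" for j using dpos[of j] unfolding y_def by simp
  have row: "x $ j * (Lsym A *v x) $ j = (\<Sum>l\<in>UNIV. A $ j $ l * (y j)^2) - (\<Sum>l\<in>UNIV. A $ j $ l * y j * y l)" for j
  proof -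
    have "(Lsym A *v x) $ j = (\<Sum>l\<in>UNIV. (if j = l then 1 else 0) * x $ l) - (\<Sum>l\<in>UNIV. A $ j $ l / (sqrt (d j) * sqrt (d l)) * x $ l)"
      by (simp add: matrix_vector_mult_def Le left_diff_distrib sum_subtractf)
    also have "\<dots> = x $ j - (\<Sum>l\<in>UNIV. A $ j $ l * y l / sqrt (d j))"
    proof -
      have s1: "(\<Sum>l\<in>UNIV. (if j = l then 1 else 0) * x $ l) = (\<Sum>l\<in>UNIV. if j = l then x $ l else 0)"
        by (rule sum.cong) simp_all
      have s2: "(\<Sum>l\<in>UNIV. A $ j $ l / (sqrt (d j) * sqrt (d l)) * x $ l) = (\<Sum>l\<in>UNIV. A $ j $ l * y l / sqrt (d j))"
        by (rule sum.cong) (simp_all add: y_def)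
      show ?thesis unfolding s1 s2 by simp
    qed
    finally have "x $ j * (Lsym A *v x) $ j = x $ j * x $ j - (\<Sum>l\<in>UNIV. A $ j $ l * y j * y l)"
      using dpos[of j] by (simp add: right_diff_distrib sum_distrib_left xj mult_ac)
    also have "x $ j * x $ j = d j * (y j)^2" using dpos[of j] by (simp add: xj power2_eq_square)
    also have "d j * (y j)^2 = (\<Sum>l\<in>UNIV. A $ j $ l * (y j)^2)" unfolding d_def by (simp add: sum_distrib_right)
    finally show ?thesis .
  qed
  have "x \<bullet> (Lsym A *v x) = (\<Sum>j\<in>UNIV. x $ j * (Lsym A *v x) $ j)" by (simp add: inner_vec_def)
  also have "\<dots> = (\<Sum>j\<in>UNIV. \<Sum>l\<in>UNIV. A $ j $ l * (y j)^2) - (\<Sum>j\<in>UNIV. \<Sum>l\<in>UNIV. A $ j $ l * y j * y l)"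
    by (simp add: row sum_subtractf)
  finally have xe: "x \<bullet> (Lsym A *v x) = (\<Sum>j\<in>UNIV. \<Sum>l\<in>UNIV. A $ j $ l * (y j)^2) - (\<Sum>j\<in>UNIV. \<Sum>l\<in>UNIV. A $ j $ l * y j * y l)" .
  have swap: "(\<Sum>j\<in>UNIV. \<Sum>l\<in>UNIV. A $ j $ l * (y l)^2) = (\<Sum>j\<in>UNIV. \<Sum>l\<in>UNIV. A $ j $ l * (y j)^2)"
    by (subst sum.swap) (simp add: sym)
  have "0 \<le> (\<Sum>j\<in>UNIV. \<Sum>l\<in>UNIV. A $ j $ l * (y j - y l)^2)"
    using nn by (intro sum_nonneg) simp
  also have "\<dots> = (\<Sum>j\<in>UNIV. \<Sum>l\<in>UNIV. A $ j $ l * (y j)^2) + (\<Sum>j\<in>UNIV. \<Sum>l\<in>UNIV. A $ j $ l * (y l)^2)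
       - 2 * (\<Sum>j\<in>UNIV. \<Sum>l\<in>UNIV. A $ j $ l * y j * y l)"
    by (simp add: power2_diff algebra_simps sum.distrib sum_subtractf sum_distrib_left)
  finally show "0 \<le> x \<bullet> (Lsym A *v x)" using xe swap by linarith
qed




lemma rowsum:
  fixes c :: "'n::finite \<Rightarrow> 'k"
  shows "(\<Sum>l\<in>UNIV. (if j = l then 0 else if c j = c l then a else b)) =
     a * (real (csize c (c j)) - 1) + b * (real CARD('n) - real (csize c (c j)))"
proof -
  have "(\<Sum>l\<in>UNIV. (if j = l then 0 else if c j = c l then a else b)) =
        (\<Sum>l\<in>UNIV. b + (if c l = c j then a - b else 0) - (if j = l then a else 0))"
    by (rule sum.cong) auto
  also have "\<dots> = real CARD('n) * b + real (csize c (c j)) * (a - b) - a"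
    by (simp add: sum.distrib sum_subtractf sum_if_card)
  finally show ?thesis by (simp add: algebra_simps)
qed

context ssbm
begin

lemma blk_match:
  fixes a b \<tau> :: real and d :: "'k \<Rightarrow> real" and A :: "real^'n^'n"
  assumes dpos: "\<forall>i. d i > 0"
   and A_def: "A = (\<chi> j l. if j = l then 0 else if c j = c l then a else b)"
   and rs: "\<forall>j. (\<Sum>l\<in>UNIV. A $ j $ l) = d (c j)"
  shows "Lsym A + \<tau> *\<^sub>R mat 1 = blk (- b *\<^sub>R outer (\<chi> i. sqrt (real (csize c i) / d i)) (\<chi> i. sqrt (real (csize c i) / d i))
      + (\<chi> i i'. if i = i' then 1 + \<tau> + (a - real (csize c i) * (a - b)) / d i else 0)) (\<lambda>i. 1 + \<tau> + a / d i)"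
    (is "_ = blk ?C ?al")
proof -
  have rsp: "\<forall>j. (\<Sum>l\<in>UNIV. A $ j $ l) > 0" using rs dpos by simp
  have "(Lsym A + \<tau> *\<^sub>R mat 1) $ j $ l = blk ?C ?al $ j $ l" for j l
  proof -
    define ni where "ni = real (csize c (c j))"
    define nl where "nl = real (csize c (c l))"
    define di where "di = d (c j)"
    define dl where "dl = d (c l)"
    have ni0: "ni > 0" using csize_pos unfolding ni_def by simp
    have nl0: "nl > 0" using csize_pos unfolding nl_def by simp
    have di0: "di > 0" using dpos unfolding di_def by simp
    have dl0: "dl > 0" using dpos unfolding dl_def by simp
    have L: "(Lsym A + \<tau> *\<^sub>R mat 1) $ j $ l = (if j = l then 1 else 0) - A $ j $ l / (sqrt di * sqrt dl) + \<tau> * (if j = l then 1 else 0)"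
      using Lsym_ent[OF rsp, of j l] rs unfolding di_def dl_def by (simp add: mat_def)
    have R: "blk ?C ?al $ j $ l = ?C $ c j $ c l / (sqrt ni * sqrt nl) + (1 + \<tau> + a / di) * ((if j = l then 1 else 0) - (if c j = c l then 1 / ni else 0))"
      unfolding blk_def ni_def nl_def di_def using ThXTh_ent F_ent2 by simp
    have Cjl: "?C $ c j $ c l = - b * (sqrt ni / sqrt di) * (sqrt nl / sqrt dl) + (if c j = c l then 1 + \<tau> + (a - ni * (a - b)) / di else 0)"
      unfolding ni_def nl_def di_def dl_def by (simp add: outer_def real_sqrt_divide)
    show ?thesis
    proof (cases "c j = c l")
      case True
      hence eq: "nl = ni" "dl = di" unfolding ni_def nl_def di_def dl_def by simp_all
      have sn: "sqrt ni * sqrt ni = ni" using ni0 by simp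
      have sd: "sqrt di * sqrt di = di" using di0 by simp
      have sqn: "sqrt ni > 0" "sqrt di > 0" using ni0 di0 by simp_all
      show ?thesis
      proof (cases "j = l")
        case True
        show ?thesis unfolding L R Cjl using \<open>c j = c l\<close> True eq sn sd sqn ni0 di0
          by (simp add: A_def field_simps)
      next
        case False
        show ?thesis unfolding L R Cjl using \<open>c j = c l\<close> False eq sn sd sqn ni0 di0
          by (simp add: A_def field_simps)
      qed
    next
      case False
      hence jl: "j \<noteq> l" by auto
      have sqn: "sqrt ni > 0" "sqrt di > 0" "sqrt nl > 0" "sqrt dl > 0" using ni0 di0 nl0 dl0 by simp_all
      show ?thesis unfolding L R Cjl using False jl sqn
        by (simp add: A_def field_simps)
    qed
  qed
  thus ?thesis by (simp add: vec_eq_iff)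
qed

end



context ssbm
begin

lemma main_loc:
  fixes p \<eta> \<tau>p \<tau>m :: real and R \<Lambda> :: "real^'k^'k"
  assumes p: "0 < p" and eta: "0 \<le> \<eta>" "\<eta> < 1/2"
    and tau: "\<tau>p > 0" "\<tau>m \<ge> 0"
    and dpos: "\<forall>i. dplus p \<eta> c i > 0 \<and> dminus p \<eta> c i > 0"
    and eig: "misqrt (Cminus p \<eta> \<tau>p c) ** Cplus p \<eta> \<tau>m c ** misqrt (Cminus p \<eta> \<tau>p c)
              = R ** \<Lambda> ** transpose R"
  shows "Tbar p \<eta> \<tau>p \<tau>m c =
           (Th ** R) ** \<Lambda> ** transpose (Th ** R)
           + (\<Sum>m<N. (alphap p \<eta> \<tau>m c (g m) / alpham p \<eta> \<tau>p c (g m)) *\<^sub>R outer (v m) (v m))"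
proof -
  have n0: "real CARD('n) > 0" by simp
  have dp: "\<forall>i. dplus p \<eta> c i > 0" and dm: "\<forall>i. dminus p \<eta> c i > 0" using dpos by auto
  have rsP: "\<forall>j. (\<Sum>l\<in>UNIV. EAp p \<eta> c $ j $ l) = dplus p \<eta> c (c j)"
  proof
    fix j
    have "(\<Sum>l\<in>UNIV. EAp p \<eta> c $ j $ l) = p * (1 - \<eta>) * (real (csize c (c j)) - 1) + p * \<eta> * (real CARD('n) - real (csize c (c j)))"
      unfolding EAp_def by (simp add: rowsum)
    also have "\<dots> = dplus p \<eta> c (c j)" unfolding dplus_def sfrac_def using n0 by (simp add: field_simps)
    finally show "(\<Sum>l\<in>UNIV. EAp p \<eta> c $ j $ l) = dplus p \<eta> c (c j)" .
  qed
  have rsM: "\<forall>j. (\<Sum>l\<in>UNIV. EAm p \<eta> c $ j $ l) = dminus p \<eta> c (c j)"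
  proof
    fix j
    have "(\<Sum>l\<in>UNIV. EAm p \<eta> c $ j $ l) = p * \<eta> * (real (csize c (c j)) - 1) + p * (1 - \<eta>) * (real CARD('n) - real (csize c (c j)))"
      unfolding EAm_def by (simp add: rowsum)
    also have "\<dots> = dminus p \<eta> c (c j)" unfolding dminus_def sfrac_def using n0 by (simp add: field_simps)
    finally show "(\<Sum>l\<in>UNIV. EAm p \<eta> c $ j $ l) = dminus p \<eta> c (c j)" .
  qed
  define Mp where "Mp = Lsym (EAp p \<eta> c) + \<tau>m *\<^sub>R mat 1"
  define Mm where "Mm = Lsym (EAm p \<eta> c) + \<tau>p *\<^sub>R mat 1"
  define Cp where "Cp = Cplus p \<eta> \<tau>m c"
  define Cm where "Cm = Cminus p \<eta> \<tau>p c"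
  define ap where "ap = alphap p \<eta> \<tau>m c"
  define am where "am = alpham p \<eta> \<tau>p c"
  have Mp_blk: "Mp = blk Cp ap"
  proof -
    have "Mp = blk (- (p * \<eta>) *\<^sub>R outer (\<chi> i. sqrt (real (csize c i) / dplus p \<eta> c i)) (\<chi> i. sqrt (real (csize c i) / dplus p \<eta> c i))
      + (\<chi> i i'. if i = i' then 1 + \<tau>m + (p * (1 - \<eta>) - real (csize c i) * (p * (1 - \<eta>) - p * \<eta>)) / dplus p \<eta> c i else 0))
      (\<lambda>i. 1 + \<tau>m + p * (1 - \<eta>) / dplus p \<eta> c i)"
      unfolding Mp_def by (rule blk_match[OF dp _ rsP]) (simp add: EAp_def)
    also have "\<dots> = blk Cp ap"
    proof -
      have "(\<chi> i i'. if i = i' then 1 + \<tau>m + (p * (1 - \<eta>) - real (csize c i) * (p * (1 - \<eta>) - p * \<eta>)) / dplus p \<eta> c i else 0)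
          = (\<chi> i i'. if i = i' then 1 + \<tau>m + p / dplus p \<eta> c i * (1 - \<eta> - real (csize c i) * (1 - 2*\<eta>)) else 0)"
      proof -
        have h: "(p * (1 - \<eta>) - x * (p * (1 - \<eta>) - p * \<eta>)) / dd = p / dd * (1 - \<eta> - x * (1 - 2*\<eta>))" for x dd :: real
        proof -
          have num: "p * (1 - \<eta>) - x * (p * (1 - \<eta>) - p * \<eta>) = p * (1 - \<eta> - x * (1 - 2*\<eta>))" by (simp add: algebra_simps)
          show ?thesis unfolding num by simp
        qed
        show ?thesis by (simp only: h)
      qed
      moreover have "(\<lambda>i. 1 + \<tau>m + p * (1 - \<eta>) / dplus p \<eta> c i) = ap" unfolding ap_def alphap_def ..
      ultimately show ?thesis unfolding Cp_def Cplus_def uplus_def by simp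
    qed
    finally show ?thesis .
  qed
  have Mm_blk: "Mm = blk Cm am"
  proof -
    have "Mm = blk (- (p * (1 - \<eta>)) *\<^sub>R outer (\<chi> i. sqrt (real (csize c i) / dminus p \<eta> c i)) (\<chi> i. sqrt (real (csize c i) / dminus p \<eta> c i))
      + (\<chi> i i'. if i = i' then 1 + \<tau>p + (p * \<eta> - real (csize c i) * (p * \<eta> - p * (1 - \<eta>))) / dminus p \<eta> c i else 0))
      (\<lambda>i. 1 + \<tau>p + p * \<eta> / dminus p \<eta> c i)"
      unfolding Mm_def by (rule blk_match[OF dm _ rsM]) (simp add: EAm_def)
    also have "\<dots> = blk Cm am"
    proof -
      have "(\<chi> i i'. if i = i' then 1 + \<tau>p + (p * \<eta> - real (csize c i) * (p * \<eta> - p * (1 - \<eta>))) / dminus p \<eta> c i else 0)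
          = (\<chi> i i'. if i = i' then 1 + \<tau>p + p / dminus p \<eta> c i * (\<eta> + real (csize c i) * (1 - 2*\<eta>)) else 0)"
      proof -
        have h: "(p * \<eta> - x * (p * \<eta> - p * (1 - \<eta>))) / dd = p / dd * (\<eta> + x * (1 - 2*\<eta>))" for x dd :: real
        proof -
          have num: "p * \<eta> - x * (p * \<eta> - p * (1 - \<eta>)) = p * (\<eta> + x * (1 - 2*\<eta>))" by (simp add: algebra_simps)
          show ?thesis unfolding num by simp
        qed
        show ?thesis by (simp only: h)
      qed
      moreover have "(\<lambda>i. 1 + \<tau>p + p * \<eta> / dminus p \<eta> c i) = am" unfolding am_def alpham_def ..
      ultimately show ?thesis unfolding Cm_def Cminus_def uminus_def by simp
    qed
    finally show ?thesis .
  qed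
  have Lm_psd: "psd_mat (Lsym (EAm p \<eta> c))"
  proof (rule lap_psd)
    show "\<forall>j l. EAm p \<eta> c $ j $ l = EAm p \<eta> c $ l $ j" by (simp add: EAm_def eq_commute)
    show "\<forall>j l. EAm p \<eta> c $ j $ l \<ge> 0" using p eta by (simp add: EAm_def)
    show "\<forall>j. (\<Sum>l\<in>UNIV. EAm p \<eta> c $ j $ l) > 0" using rsM dm by simp
  qed
  have Cm_comp: "Cm = transpose Th ** Mm ** Th" using blk_compress[of Cm am] Mm_blk by simp
  have Cm_pd: "z \<bullet> (Cm *v z) \<ge> \<tau>p * (z \<bullet> z)" for z
  proof -
    define y where "y = Th *v z"
    have "z \<bullet> (Cm *v z) = z \<bullet> (transpose Th *v (Mm *v y))"
      unfolding Cm_comp y_def by (simp add: matrix_vector_mul_assoc matrix_mul_assoc)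
    also have "\<dots> = y \<bullet> (Mm *v y)" using inner_mv_transpose[of z "transpose Th" "Mm *v y"] y_def by simp
    also have "\<dots> = y \<bullet> (Lsym (EAm p \<eta> c) *v y) + \<tau>p * (y \<bullet> y)"
      unfolding Mm_def by (simp add: matrix_vector_mult_add_rdistrib scaleR_mv inner_add_right)
    finally have e: "z \<bullet> (Cm *v z) = y \<bullet> (Lsym (EAm p \<eta> c) *v y) + \<tau>p * (y \<bullet> y)" .
    have "y \<bullet> y = z \<bullet> z"
      using inner_mv_transpose[of y Th z] unfolding y_def by (simp add: Th_mv_Th inner_commute)
    moreover have "y \<bullet> (Lsym (EAm p \<eta> c) *v y) \<ge> 0" using Lm_psd unfolding psd_mat_def by blast
    ultimately show ?thesis using e by simp
  qed
  have Cm_sym: "transpose Cm = Cm"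
    unfolding Cm_def Cminus_def by (simp add: vec_eq_iff transpose_def outer_def mult.commute)
  have Cm_psd: "psd_mat Cm" unfolding psd_mat_def
  proof
    fix z :: "real^'k"
    have "0 \<le> \<tau>p * (z \<bullet> z)" using tau by simp
    thus "0 \<le> z \<bullet> (Cm *v z)" using Cm_pd[of z] by linarith
  qed
  define S where "S = msqrt Cm"
  have S: "transpose S = S" "psd_mat S" "S ** S = Cm"
    using msqrt_props[OF Cm_sym Cm_psd] unfolding S_def by auto
  have "inj ((*v) S)"
  proof (rule injI)
    fix x y assume "S *v x = S *v y"
    hence "S *v (x - y) = 0" by (simp add: matrix_vector_mult_diff_distrib)
    hence "Cm *v (x - y) = 0" using S(3) by (metis matrix_vector_mul_assoc matrix_vector_mult_0_right)
    hence "(x - y) \<bullet> (Cm *v (x - y)) = 0" by simp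
    hence "\<tau>p * ((x - y) \<bullet> (x - y)) \<le> 0" using Cm_pd[of "x - y"] by simp
    hence "(x - y) \<bullet> (x - y) \<le> 0" using tau by (simp add: mult_le_0_iff)
    hence "(x - y) \<bullet> (x - y) = 0" using inner_ge_zero[of "x - y"] by linarith
    thus "x = y" by simp
  qed
  then obtain Si where "Si ** S = mat 1" using matrix_left_invertible_injective by blast
  hence SSi: "S ** Si = mat 1" using matrix_left_right_inverse by blast
  have misCm: "misqrt Cm = Si" unfolding misqrt_def S_def[symmetric] by (rule matrix_inv_eq[OF SSi])
  have am0: "am i > 0" for i
  proof -
    have "p * \<eta> / dminus p \<eta> c i \<ge> 0" using p eta dm[rule_format, of i] by simp
    thus ?thesis unfolding am_def alpham_def using tau by simp
  qed
  define sa where "sa i = sqrt (am i)" for i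
  define isa where "isa i = 1 / sqrt (am i)" for i
  have msMm: "msqrt Mm = blk S sa"
  proof (rule msqrt_eq)
    show "transpose (blk S sa) = blk S sa" by (simp add: blk_transpose S(1))
    show "psd_mat (blk S sa)" by (rule blk_psd[OF S(2)]) (simp add: sa_def am0 less_imp_le)
    have "(\<lambda>i. sa i * sa i) = am" using am0 by (simp add: sa_def fun_eq_iff less_imp_le)
    thus "blk S sa ** blk S sa = Mm" by (simp add: blk_mul S(3) Mm_blk)
  qed
  have misMm: "misqrt Mm = blk Si isa"
  proof -
    have "(\<lambda>i. sa i * isa i) = (\<lambda>_. 1)" using am0 by (simp add: sa_def isa_def fun_eq_iff less_imp_neq[symmetric])
    hence "blk S sa ** blk Si isa = mat 1" by (simp add: blk_mul SSi blk_id)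
    thus ?thesis unfolding misqrt_def msMm by (rule matrix_inv_eq)
  qed
  have "Tbar p \<eta> \<tau>p \<tau>m c = blk Si isa ** blk Cp ap ** blk Si isa"
    unfolding Tbar_def Mp_def[symmetric] Mm_def[symmetric] misMm Mp_blk ..
  also have "\<dots> = blk (Si ** Cp ** Si) (\<lambda>i. isa i * ap i * isa i)" by (simp add: blk_mul)
  also have "Si ** Cp ** Si = R ** \<Lambda> ** transpose R" using eig misCm unfolding Cm_def Cp_def by simp
  also have "(\<lambda>i. isa i * ap i * isa i) = (\<lambda>i. ap i / am i)"
    using am0 by (simp add: isa_def fun_eq_iff less_imp_le)
  also have "blk (R ** \<Lambda> ** transpose R) (\<lambda>i. ap i / am i) =
           (Th ** R) ** \<Lambda> ** transpose (Th ** R)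
           + (\<Sum>m<N. (alphap p \<eta> \<tau>m c (g m) / alpham p \<eta> \<tau>p c (g m)) *\<^sub>R outer (v m) (v m))"
    unfolding blk_def F_def ap_def am_def by (simp add: matrix_transpose_mul matrix_mul_assoc)
  finally show ?thesis .
qed

end

theorem mainTheorem9:
  fixes c :: "'n::finite \<Rightarrow> 'k::finite"
    and p \<eta> \<tau>p \<tau>m :: real
    and v :: "nat \<Rightarrow> real^'n" and g :: "nat \<Rightarrow> 'k"
    and R \<Lambda> :: "real^'k^'k"
  assumes n2: "CARD('n) \<ge> 2" and k2: "CARD('k) \<ge> 2"
    and p: "0 < p" "p \<le> 1" and eta: "0 \<le> \<eta>" "\<eta> < 1/2"
    and clusters_nonempty: "surj c"
    and tau: "\<tau>p > 0" "\<tau>m \<ge> 0"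
    and dpos: "\<forall>i. dplus p \<eta> c i > 0 \<and> dminus p \<eta> c i > 0"
    and orthonormal: "\<forall>m < CARD('n) - CARD('k). \<forall>m' < CARD('n) - CARD('k).
                        v m \<bullet> v m' = (if m = m' then 1 else 0)"
    and span_perp: "span (v ` {..< CARD('n) - CARD('k)}) =
                      {x. \<forall>y \<in> span (columns (Theta c)). x \<bullet> y = 0}"
    and support: "\<forall>m < CARD('n) - CARD('k). \<forall>j. v m $ j \<noteq> 0 \<longrightarrow> c j = g m"
    and counts: "\<forall>i. card {m. m < CARD('n) - CARD('k) \<and> g m = i} = csize c i - 1"
    and R_orth: "orthogonal_matrix R"
    and Lambda_diag: "\<forall>i j. i \<noteq> j \<longrightarrow> \<Lambda> $ i $ j = 0"
    and eig: "misqrt (Cminus p \<eta> \<tau>p c) ** Cplus p \<eta> \<tau>m c ** misqrt (Cminus p \<eta> \<tau>p c)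
              = R ** \<Lambda> ** transpose R"
  shows "Tbar p \<eta> \<tau>p \<tau>m c =
           (Theta c ** R) ** \<Lambda> ** transpose (Theta c ** R)
           + (\<Sum>m < CARD('n) - CARD('k).
                (alphap p \<eta> \<tau>m c (g m) / alpham p \<eta> \<tau>p c (g m)) *\<^sub>R outer (v m) (v m))"
proof -
  interpret ssbm c v g "CARD('n) - CARD('k)"
    using clusters_nonempty orthonormal span_perp support by unfold_locales
  show ?thesis using main_loc[OF p(1) eta tau dpos eig] .
qed



end
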